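(* Suppose that either (1) the cost function $C$ is submodular and all valuations are supermodular, or (2) $C$ is submodular and player-wise symmetric and all valuations are symmetric. Then the Sequential Mechanism is groupstrategyproof, $1$-budget-balanced (i.e. $\sum_ip_i=C(\overrightarrow{ALG})$), is an $n$-approximation to the social cost, and satisfies individual rationality and no positive transfers.
   Context: Setting. $N=\{1,\dots,n\}$ is a set of players and $M_1,\dots,M_n$ are pairwise disjoint finite sets; $M=\bigcup_i M_i$; allocations $\vec S=(S_1,\dots,S_n)$ with $S_i\subseteq M_i$ are identified with subsets of $M$, with componentwise set operations. A cost function is a monotone $C:2^M\to\mathbb{R}_{\ge0}$ with $C(\emptyset)=0$; valuations $v_i:2^{M_i}\to\mathbb{R}_{\ge0}$ are monotone with $v_i(\emptyset)=0$. Sequential Mechanism: start with $ALG_i=\emptyset$ for all $i$. For $i=1,\dots,n$ in order: let $\mathcal A_i=\arg\max_{S\subseteq M_i}v_i(S)-[C(\overrightarrow{ALG}\cup S)-C(\overrightarrow{ALG})]$ (with $\overrightarrow{ALG}$ the current allocation, in which only players $1,\dots,i-1$ have been assigned), set $ALG_i$ to an element of $\mathcal A_i$ of maximum cardinality, and charge $p_i=C(ALG_1,\dots,ALG_i)-C(ALG_1,\dots,ALG_{i-1})$. Groupstrategyproof: for every $K\subseteq N$ and every joint misreport by $K$ (other players reporting truthfully), if $v_i(S_i)-p_i\le v_i(S'_i)-p'_i$ for all $i\in K$ then equality holds for all $i\in K$, where $(\vec S,\vec p)$ and $(\vec S',\vec p')$ are the outputs under truthful reports and under the misreport. Individual rationality: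 $p_i\le v_i(ALG_i)$; no positive transfers: $p_i\ge0$. Social cost $\pi(\vec S)=C(\vec S)+\sum_i[v_i(M_i)-v_i(S_i)]$; $n$-approximation: $\pi(\overrightarrow{ALG})\le n\min_{\vec S}\pi(\vec S)$ for all profiles. Supermodular $v$: $v(S)+v(T)\le v(S\cup T)+v(S\cap T)$; submodular $C$: $C(S)+C(T)\ge C(S\cup T)+C(S\cap T)$. Symmetric valuation: $v_i(S)=v_i(T)$ whenever $|S|=|T|$. Player-wise symmetric cost: $C(\vec S)=C(\vec T)$ whenever $|S_i|=|T_i|$ for all $i$. *)

theory Defs
  imports Complex_Main "HOL-Library.Disjoint_Sets"
begin

text \<open>Players are 1..n; M i is the finite item set of player i; an allocation is a
 family ALG with ALG i \<subseteq> M i, identified with the union of its components.\<close>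

definition items :: "nat \<Rightarrow> (nat \<Rightarrow> 'a set) \<Rightarrow> 'a set" where
  "items n M = (\<Union>i\<in>{1..n}. M i)"

definition valid_items :: "nat \<Rightarrow> (nat \<Rightarrow> 'a set) \<Rightarrow> bool" where
  "valid_items n M \<longleftrightarrow> (\<forall>i\<in>{1..n}. finite (M i)) \<and> disjoint_family_on M {1..n}"

definition cost_function :: "'a set \<Rightarrow> ('a set \<Rightarrow> real) \<Rightarrow> bool" where
  "cost_function A C \<longleftrightarrow> C {} = 0 \<and> (\<forall>S\<subseteq>A. 0 \<le> C S) \<and>
     (\<forall>S T. S \<subseteq> T \<longrightarrow> T \<subseteq> A \<longrightarrow> C S \<le> C T)"

definition valuation :: "'a set \<Rightarrow> ('a set \<Rightarrow> real) \<Rightarrow> bool" where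
  "valuation A v \<longleftrightarrow> v {} = 0 \<and> (\<forall>S\<subseteq>A. 0 \<le> v S) \<and>
     (\<forall>S T. S \<subseteq> T \<longrightarrow> T \<subseteq> A \<longrightarrow> v S \<le> v T)"

definition supermodular_on :: "'a set \<Rightarrow> ('a set \<Rightarrow> real) \<Rightarrow> bool" where
  "supermodular_on A v \<longleftrightarrow> (\<forall>S T. S \<subseteq> A \<longrightarrow> T \<subseteq> A \<longrightarrow> v S + v T \<le> v (S \<union> T) + v (S \<inter> T))"

definition submodular_on :: "'a set \<Rightarrow> ('a set \<Rightarrow> real) \<Rightarrow> bool" where
  "submodular_on A C \<longleftrightarrow> (\<forall>S T. S \<subseteq> A \<longrightarrow> T \<subseteq> A \<longrightarrow> C S + C T \<ge> C (S \<union> T) + C (S \<inter> T))"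

definition symmetric_on :: "'a set \<Rightarrow> ('a set \<Rightarrow> real) \<Rightarrow> bool" where
  "symmetric_on A v \<longleftrightarrow> (\<forall>S T. S \<subseteq> A \<longrightarrow> T \<subseteq> A \<longrightarrow> card S = card T \<longrightarrow> v S = v T)"

definition playerwise_symmetric :: "nat \<Rightarrow> (nat \<Rightarrow> 'a set) \<Rightarrow> ('a set \<Rightarrow> real) \<Rightarrow> bool" where
  "playerwise_symmetric n M C \<longleftrightarrow> (\<forall>S T. S \<subseteq> items n M \<longrightarrow> T \<subseteq> items n M \<longrightarrow>
     (\<forall>i\<in>{1..n}. card (S \<inter> M i) = card (T \<inter> M i)) \<longrightarrow> C S = C T)"

definition before :: "(nat \<Rightarrow> 'a set) \<Rightarrow> nat \<Rightarrow> 'a set" where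
  "before ALG i = (\<Union>j\<in>{1..<i}. ALG j)"

definition upto_alloc :: "(nat \<Rightarrow> 'a set) \<Rightarrow> nat \<Rightarrow> 'a set" where
  "upto_alloc ALG i = (\<Union>j\<in>{1..i}. ALG j)"

text \<open>ALG is a possible outcome of the Sequential Mechanism on reported valuations v
 (any choice among maximum-cardinality maximisers is allowed).\<close>
definition seq_run :: "nat \<Rightarrow> (nat \<Rightarrow> 'a set) \<Rightarrow> ('a set \<Rightarrow> real) \<Rightarrow> (nat \<Rightarrow> 'a set \<Rightarrow> real)
    \<Rightarrow> (nat \<Rightarrow> 'a set) \<Rightarrow> bool" where
  "seq_run n M C v ALG \<longleftrightarrow> (\<forall>i\<in>{1..n}.
     (let u = (\<lambda>S. v i S - (C (before ALG i \<union> S) - C (before ALG i))) in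
       ALG i \<subseteq> M i \<and>
       (\<forall>S. S \<subseteq> M i \<longrightarrow> u S \<le> u (ALG i)) \<and>
       (\<forall>S. S \<subseteq> M i \<longrightarrow> u S = u (ALG i) \<longrightarrow> card S \<le> card (ALG i))))"

definition payment :: "('a set \<Rightarrow> real) \<Rightarrow> (nat \<Rightarrow> 'a set) \<Rightarrow> nat \<Rightarrow> real" where
  "payment C ALG i = C (upto_alloc ALG i) - C (before ALG i)"

definition social_cost :: "nat \<Rightarrow> (nat \<Rightarrow> 'a set) \<Rightarrow> ('a set \<Rightarrow> real) \<Rightarrow> (nat \<Rightarrow> 'a set \<Rightarrow> real)
    \<Rightarrow> (nat \<Rightarrow> 'a set) \<Rightarrow> real" where
  "social_cost n M C v S = C (\<Union>i\<in>{1..n}. S i) + (\<Sum>i\<in>{1..n}. v i (M i) - v i (S i))"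

definition allocation :: "nat \<Rightarrow> (nat \<Rightarrow> 'a set) \<Rightarrow> (nat \<Rightarrow> 'a set) \<Rightarrow> bool" where
  "allocation n M S \<longleftrightarrow> (\<forall>i\<in>{1..n}. S i \<subseteq> M i)"

definition groupstrategyproof :: "nat \<Rightarrow> (nat \<Rightarrow> 'a set) \<Rightarrow> ('a set \<Rightarrow> real) \<Rightarrow>
    (nat \<Rightarrow> ('a set \<Rightarrow> real) \<Rightarrow> bool) \<Rightarrow> (nat \<Rightarrow> 'a set \<Rightarrow> real) \<Rightarrow> bool" where
  "groupstrategyproof n M C D v \<longleftrightarrow>
    (\<forall>K w ALG ALG'. K \<subseteq> {1..n} \<longrightarrow>
       (\<forall>i\<in>{1..n}. D i (w i)) \<longrightarrow>
       (\<forall>i\<in>{1..n} - K. \<forall>S\<subseteq>M i. w i S = v i S) \<longrightarrow>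
       seq_run n M C v ALG \<longrightarrow> seq_run n M C w ALG' \<longrightarrow>
       (\<forall>i\<in>K. v i (ALG i) - payment C ALG i \<le> v i (ALG' i) - payment C ALG' i) \<longrightarrow>
       (\<forall>i\<in>K. v i (ALG i) - payment C ALG i = v i (ALG' i) - payment C ALG' i))"

definition seq_mech_properties :: "nat \<Rightarrow> (nat \<Rightarrow> 'a set) \<Rightarrow> ('a set \<Rightarrow> real) \<Rightarrow>
    (nat \<Rightarrow> ('a set \<Rightarrow> real) \<Rightarrow> bool) \<Rightarrow> (nat \<Rightarrow> 'a set \<Rightarrow> real) \<Rightarrow> bool" where
  "seq_mech_properties n M C D v \<longleftrightarrow>
     groupstrategyproof n M C D v \<and>
     (\<forall>ALG. seq_run n M C v ALG \<longrightarrow>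
        (\<Sum>i\<in>{1..n}. payment C ALG i) = C (\<Union>i\<in>{1..n}. ALG i) \<and>
        (\<forall>S. allocation n M S \<longrightarrow>
             social_cost n M C v ALG \<le> real n * social_cost n M C v S) \<and>
        (\<forall>i\<in>{1..n}. payment C ALG i \<le> v i (ALG i)) \<and>
        (\<forall>i\<in>{1..n}. 0 \<le> payment C ALG i))"

end

theory Submission
  imports Defs
begin



definition ut :: "('a set \<Rightarrow> real) \<Rightarrow> ('a set \<Rightarrow> real) \<Rightarrow> 'a set \<Rightarrow> 'a set \<Rightarrow> real" where
  "ut C f A S = f S - (C (A \<union> S) - C A)"

lemma seq_run_iff:
  "seq_run n M C v ALG \<longleftrightarrow> (\<forall>i\<in>{1..n}. ALG i \<subseteq> M i \<and>
     (\<forall>S. S \<subseteq> M i \<longrightarrow> ut C (v i) (before ALG i) S \<le> ut C (v i) (before ALG i) (ALG i)) \<and>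
     (\<forall>S. S \<subseteq> M i \<longrightarrow> ut C (v i) (before ALG i) S = ut C (v i) (before ALG i) (ALG i) \<longrightarrow> card S \<le> card (ALG i)))"
  by (simp add: seq_run_def ut_def Let_def)

lemma upto_eq: "1 \<le> k \<Longrightarrow> upto_alloc F k = before F k \<union> F k"
proof -
  assume "1 \<le> k"
  then have "{1..k} = insert k {1..<k}" by auto
  then show ?thesis by (auto simp: upto_alloc_def before_def)
qed

lemma before_Suc: "before F (Suc m) = upto_alloc F m"
  by (simp add: before_def upto_alloc_def atLeastLessThanSuc_atLeastAtMost)

lemma payment_ut: "1 \<le> k \<Longrightarrow> f (F k) - payment C F k = ut C f (before F k) (F k)"
  by (simp add: payment_def ut_def upto_eq)

lemma telescope: "C {} = 0 \<Longrightarrow> (\<Sum>i\<in>{1..m}. payment C F i) = C (upto_alloc F m)"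
proof (induction m)
  case 0
  then show ?case by (simp add: upto_alloc_def)
next
  case (Suc m)
  have "(\<Sum>i\<in>{1..Suc m}. payment C F i) = (\<Sum>i\<in>{1..m}. payment C F i) + payment C F (Suc m)"
    by simp
  also have "\<dots> = C (upto_alloc F (Suc m))" using Suc by (simp add: payment_def before_Suc)
  finally show ?case .
qed

locale mech =
  fixes n :: nat and M :: "nat \<Rightarrow> 'a set" and C :: "'a set \<Rightarrow> real"
  assumes valid: "valid_items n M" and cf: "cost_function (items n M) C"
    and sub: "submodular_on (items n M) C"
begin

lemma finM: "i \<in> {1..n} \<Longrightarrow> finite (M i)"
  using valid by (simp add: valid_items_def)

lemma disjM: "i \<in> {1..n} \<Longrightarrow> j \<in> {1..n} \<Longrightarrow> i \<noteq> j \<Longrightarrow> M i \<inter> M j = {}"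
  using valid by (simp add: valid_items_def disjoint_family_on_def)

lemma monoC: "S \<subseteq> T \<Longrightarrow> T \<subseteq> items n M \<Longrightarrow> C S \<le> C T"
  using cf by (simp add: cost_function_def)

lemma C0: "C {} = 0"
  using cf by (simp add: cost_function_def)

lemma M_items: "i \<in> {1..n} \<Longrightarrow> M i \<subseteq> items n M"
  by (auto simp: items_def)

lemma before_sub: "(\<forall>j\<in>{1..<k}. F j \<subseteq> M j) \<Longrightarrow> k \<le> Suc n \<Longrightarrow> before F k \<subseteq> items n M"
proof
  fix x assume a: "\<forall>j\<in>{1..<k}. F j \<subseteq> M j" and k: "k \<le> Suc n" and x: "x \<in> before F k"
  then obtain j where j: "j \<in> {1..<k}" "x \<in> F j" unfolding before_def by blast
  then have "j \<in> {1..n}" "x \<in> M j" using a k by auto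
  then show "x \<in> items n M" unfolding items_def by blast
qed

lemma before_disj: "(\<forall>j\<in>{1..<k}. F j \<subseteq> M j) \<Longrightarrow> k \<in> {1..n} \<Longrightarrow> before F k \<inter> M k = {}"
proof -
  assume a: "\<forall>j\<in>{1..<k}. F j \<subseteq> M j" and k: "k \<in> {1..n}"
  show ?thesis
  proof (rule ccontr)
    assume "before F k \<inter> M k \<noteq> {}"
    then obtain x j where "j \<in> {1..<k}" "x \<in> F j" "x \<in> M k" unfolding before_def by blast
    moreover then have "M j \<inter> M k = {}" using k by (intro disjM) auto
    ultimately show False using a by blast
  qed
qed

lemma before_comp: "(\<forall>j\<in>{1..<k}. F j \<subseteq> M j) \<Longrightarrow> k \<in> {1..n} \<Longrightarrow> Z \<subseteq> M k \<Longrightarrow> m \<in> {1..n} \<Longrightarrow>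
   (before F k \<union> Z) \<inter> M m = (if m < k then F m else if m = k then Z else {})"
proof -
  assume a: "\<forall>j\<in>{1..<k}. F j \<subseteq> M j" and k: "k \<in> {1..n}" and Z: "Z \<subseteq> M k" and m: "m \<in> {1..n}"
  have dj: "\<And>j. j \<in> {1..<k} \<Longrightarrow> j \<noteq> m \<Longrightarrow> F j \<inter> M m = {}"
    using a disjM m k by fastforce
  have dz: "m \<noteq> k \<Longrightarrow> Z \<inter> M m = {}" using Z disjM m k by fastforce
  show ?thesis
  proof (cases "m < k")
    case True
    then have "m \<in> {1..<k}" using m by auto
    then show ?thesis using True dj dz a by (auto simp: before_def) (metis (no_types) IntI atLeastLessThan_iff empty_iff)
  next
    case False
    then show ?thesis using dj dz Z by (auto simp: before_def) (metis (no_types) IntI atLeastLessThan_iff empty_iff)+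
  qed
qed

lemma submod: "S \<subseteq> items n M \<Longrightarrow> T \<subseteq> items n M \<Longrightarrow> C (S \<union> T) + C (S \<inter> T) \<le> C S + C T"
  using sub unfolding submodular_on_def by blast

lemma marginal:
  assumes "A' \<subseteq> A" "A \<subseteq> items n M" "S \<subseteq> items n M" "S \<inter> A = {}"
  shows "C (A \<union> S) - C A \<le> C (A' \<union> S) - C A'"
proof -
  have "C ((A' \<union> S) \<union> A) + C ((A' \<union> S) \<inter> A) \<le> C (A' \<union> S) + C A"
    by (rule submod) (use assms in auto)+
  moreover have "(A' \<union> S) \<union> A = A \<union> S" using assms by auto
  moreover have "(A' \<union> S) \<inter> A = A'" using assms by auto
  ultimately show ?thesis by simp
qed

end



context mech
begin

lemma runP:
  assumes r: "seq_run n M C v ALG" and k: "k \<in> {1..n}"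
  shows "ALG k \<subseteq> M k"
    "\<And>S. S \<subseteq> M k \<Longrightarrow> ut C (v k) (before ALG k) S \<le> ut C (v k) (before ALG k) (ALG k)"
    "\<And>S. S \<subseteq> M k \<Longrightarrow> ut C (v k) (before ALG k) S = ut C (v k) (before ALG k) (ALG k) \<Longrightarrow> card S \<le> card (ALG k)"
  using r k unfolding seq_run_iff by auto

lemma run_pre: "seq_run n M C v ALG \<Longrightarrow> k \<le> Suc n \<Longrightarrow> \<forall>j\<in>{1..<k}. ALG j \<subseteq> M j"
  using runP(1) by fastforce

lemma run_A:
  assumes r: "seq_run n M C v ALG" and k: "k \<in> {1..n}"
  shows "before ALG k \<subseteq> items n M" "before ALG k \<inter> M k = {}"
  using before_sub[OF run_pre[OF r]] before_disj[OF run_pre[OF r]] k by auto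

lemma ut_mono_A:
  assumes "A'' \<subseteq> A" "A \<subseteq> items n M" "A \<inter> M k = {}" "k \<in> {1..n}" "X \<subseteq> M k"
  shows "ut C f A'' X \<le> ut C f A X"
proof -
  have "C (A \<union> X) - C A \<le> C (A'' \<union> X) - C A''"
    using marginal[of A'' A X] assms M_items by blast
  then show ?thesis unfolding ut_def by simp
qed

lemma weak_loss:
  assumes r: "seq_run n M C v ALG" and k: "k \<in> {1..n}" and "A'' \<subseteq> before ALG k" "X \<subseteq> M k"
  shows "ut C (v k) A'' X \<le> ut C (v k) (before ALG k) (ALG k)"
  using ut_mono_A[where f="v k", OF assms(3) run_A[OF r k] k assms(4)] runP(2)[OF r k assms(4)] by linarith

lemma util_eq: "i \<in> {1..n} \<Longrightarrow> f (F i) - payment C F i = ut C f (before F i) (F i)"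
  by (rule payment_ut) simp

lemma pw_apply:
  assumes "playerwise_symmetric n M C" "S \<subseteq> items n M" "T \<subseteq> items n M"
    "\<And>i. i \<in> {1..n} \<Longrightarrow> card (S \<inter> M i) = card (T \<inter> M i)"
  shows "C S = C T"
  using assms unfolding playerwise_symmetric_def by blast

lemma budget: "(\<Sum>i\<in>{1..n}. payment C ALG i) = C (\<Union>i\<in>{1..n}. ALG i)"
  using telescope[where C=C and m=n and F=ALG] C0 by (simp add: upto_alloc_def)

lemma ir:
  assumes r: "seq_run n M C v ALG" and k: "k \<in> {1..n}" and val: "valuation (M k) (v k)"
  shows "payment C ALG k \<le> v k (ALG k)"
proof -
  have "ut C (v k) (before ALG k) {} \<le> ut C (v k) (before ALG k) (ALG k)"
    using runP(2)[OF r k] by simp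
  moreover have "v k {} = 0" using val by (simp add: valuation_def)
  ultimately show ?thesis using payment_ut[of k "v k" ALG C] k by (simp add: ut_def)
qed

lemma npt:
  assumes r: "seq_run n M C v ALG" and k: "k \<in> {1..n}"
  shows "0 \<le> payment C ALG k"
proof -
  have "before ALG k \<union> ALG k \<subseteq> items n M"
    using run_A[OF r k] runP(1)[OF r k] M_items[OF k] by blast
  then have "C (before ALG k) \<le> C (before ALG k \<union> ALG k)" by (intro monoC) auto
  then show ?thesis using k by (simp add: payment_def upto_eq)
qed

lemma approx:
  assumes r: "seq_run n M C v ALG" and vals: "\<forall>i\<in>{1..n}. valuation (M i) (v i)"
    and S: "allocation n M S"
  shows "social_cost n M C v ALG \<le> real n * social_cost n M C v S"
proof -
  have h: "v i (S i) - C (S i) \<le> v i (ALG i) - payment C ALG i" if i: "i \<in> {1..n}" for i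
  proof -
    have Si: "S i \<subseteq> M i" using S i by (simp add: allocation_def)
    have "ut C (v i) {} (S i) \<le> ut C (v i) (before ALG i) (ALG i)"
      using weak_loss[OF r i _ Si] by simp
    then show ?thesis using payment_ut[of i "v i" ALG C] i C0 by (simp add: ut_def)
  qed
  have US: "(\<Union>i\<in>{1..n}. S i) \<subseteq> items n M" using S by (auto simp: allocation_def items_def)
  have hC: "C (S i) \<le> C (\<Union>i\<in>{1..n}. S i)" if i: "i \<in> {1..n}" for i
    using monoC[OF _ US] i by blast
  have s1: "(\<Sum>i\<in>{1..n}. v i (S i) - C (S i)) \<le> (\<Sum>i\<in>{1..n}. v i (ALG i) - payment C ALG i)"
    using h by (intro sum_mono) auto
  have s2: "(\<Sum>i\<in>{1..n}. C (S i)) \<le> (\<Sum>i\<in>{1..n}. C (\<Union>i\<in>{1..n}. S i))"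
    using hC by (intro sum_mono) auto
  define D where "D = (\<Sum>i\<in>{1..n}. v i (M i) - v i (S i))"
  have D0: "0 \<le> D" unfolding D_def
  proof (intro sum_nonneg)
    fix i assume i: "i \<in> {1..n}"
    then show "0 \<le> v i (M i) - v i (S i)" using vals S
      by (auto simp: valuation_def allocation_def)
  qed
  have Dn: "D \<le> real n * D"
  proof (cases "n = 0")
    case True then show ?thesis by (simp add: D_def)
  next
    case False then have "1 \<le> real n" by simp
    then show ?thesis using D0 by (metis mult_le_cancel_right1 not_less)
  qed
  have eq1: "social_cost n M C v ALG = C (\<Union>i\<in>{1..n}. ALG i) + (\<Sum>i\<in>{1..n}. v i (M i)) - (\<Sum>i\<in>{1..n}. v i (ALG i))"
    by (simp add: social_cost_def sum_subtractf)
  have eq2: "(\<Sum>i\<in>{1..n}. v i (ALG i) - payment C ALG i) = (\<Sum>i\<in>{1..n}. v i (ALG i)) - C (\<Union>i\<in>{1..n}. ALG i)"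
    using budget[of ALG] by (simp add: sum_subtractf)
  have eq3: "(\<Sum>i\<in>{1..n}. v i (S i) - C (S i)) = (\<Sum>i\<in>{1..n}. v i (S i)) - (\<Sum>i\<in>{1..n}. C (S i))"
    by (simp add: sum_subtractf)
  have eq4: "D = (\<Sum>i\<in>{1..n}. v i (M i)) - (\<Sum>i\<in>{1..n}. v i (S i))"
    by (simp add: D_def sum_subtractf)
  have eq5: "social_cost n M C v S = C (\<Union>i\<in>{1..n}. S i) + D"
    by (simp add: social_cost_def D_def)
  have "social_cost n M C v ALG \<le> real n * C (\<Union>i\<in>{1..n}. S i) + D"
    using eq1 eq2 eq3 eq4 s1 s2 by simp
  also have "\<dots> \<le> real n * social_cost n M C v S" using Dn eq5 by (simp add: algebra_simps)
  finally show ?thesis .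
qed

end



context mech
begin

lemma sup_ut:
  assumes k: "k \<in> {1..n}" and A: "A \<subseteq> items n M" and sm: "supermodular_on (M k) f"
    and X: "X \<subseteq> M k" and Y: "Y \<subseteq> M k"
  shows "ut C f A X + ut C f A Y \<le> ut C f A (X \<union> Y) + ut C f A (X \<inter> Y)"
proof -
  have 1: "f X + f Y \<le> f (X \<union> Y) + f (X \<inter> Y)" using sm X Y by (simp add: supermodular_on_def)
  have "C ((A \<union> X) \<union> (A \<union> Y)) + C ((A \<union> X) \<inter> (A \<union> Y)) \<le> C (A \<union> X) + C (A \<union> Y)"
    by (rule submod) (use A X Y M_items[OF k] in auto)+
  moreover have "(A \<union> X) \<union> (A \<union> Y) = A \<union> (X \<union> Y)" "(A \<union> X) \<inter> (A \<union> Y) = A \<union> (X \<inter> Y)" by auto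
  ultimately show ?thesis using 1 unfolding ut_def by simp
qed

lemma conclude_sub:
  assumes r: "seq_run n M C v ALG" and k: "k \<in> {1..n}" and X: "X \<subseteq> M k"
    and le: "ut C (v k) (before ALG k) (ALG k) \<le> ut C (v k) (before ALG k) (X \<union> ALG k)"
  shows "X \<subseteq> ALG k"
proof -
  have U: "X \<union> ALG k \<subseteq> M k" using X runP(1)[OF r k] by auto
  then have "ut C (v k) (before ALG k) (X \<union> ALG k) = ut C (v k) (before ALG k) (ALG k)"
    using runP(2)[OF r k U] le by linarith
  then have "card (X \<union> ALG k) \<le> card (ALG k)" using runP(3)[OF r k U] by simp
  moreover have "finite (X \<union> ALG k)" using U finM[OF k] finite_subset by blast
  ultimately have "ALG k = X \<union> ALG k" by (intro card_seteq) auto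
  then show ?thesis by blast
qed

lemma nonK1:
  assumes k: "k \<in> {1..n}" and AA: "A' \<subseteq> A" and A: "A \<subseteq> items n M" "A \<inter> M k = {}"
    and sm: "supermodular_on (M k) f" and X: "X \<subseteq> M k" and Y: "Y \<subseteq> M k"
    and mx: "\<forall>S. S \<subseteq> M k \<longrightarrow> ut C f A' S \<le> ut C f A' X"
  shows "ut C f A Y \<le> ut C f A (X \<union> Y)"
proof -
  have 1: "f X + f Y \<le> f (X \<union> Y) + f (X \<inter> Y)" using sm X Y by (simp add: supermodular_on_def)
  have "C ((A' \<union> X) \<union> (A \<union> Y)) + C ((A' \<union> X) \<inter> (A \<union> Y)) \<le> C (A' \<union> X) + C (A \<union> Y)"
    by (rule submod) (use A AA X Y M_items[OF k] in auto)+
  moreover have "(A' \<union> X) \<union> (A \<union> Y) = A \<union> (X \<union> Y)" using AA by auto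
  moreover have "(A' \<union> X) \<inter> (A \<union> Y) = A' \<union> (X \<inter> Y)" using AA A X Y by auto
  moreover have "ut C f A' (X \<inter> Y) \<le> ut C f A' X" using mx X by (meson inf.coboundedI1)
  ultimately show ?thesis using 1 unfolding ut_def by simp
qed

lemma gsp1:
  assumes supv: "\<forall>i\<in>{1..n}. supermodular_on (M i) (v i)"
    and K: "K \<subseteq> {1..n}" and wv: "\<forall>i\<in>{1..n} - K. \<forall>S\<subseteq>M i. w i S = v i S"
    and r: "seq_run n M C v ALG" and r': "seq_run n M C w ALG'"
    and hyp: "\<forall>i\<in>K. v i (ALG i) - payment C ALG i \<le> v i (ALG' i) - payment C ALG' i"
  shows "\<forall>i\<in>K. v i (ALG i) - payment C ALG i = v i (ALG' i) - payment C ALG' i"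
proof -
  have inv: "k \<in> {1..n} \<longrightarrow> ALG' k \<subseteq> ALG k" for k
  proof (induction k rule: less_induct)
    case (less k)
    show ?case
    proof
      assume k: "k \<in> {1..n}"
      define A where "A = before ALG k"
      define A' where "A' = before ALG' k"
      define X where "X = ALG' k"
      define Y where "Y = ALG k"
      have IH: "\<forall>j\<in>{1..<k}. ALG' j \<subseteq> ALG j" using less k by auto
      have AA: "A' \<subseteq> A" using IH unfolding A_def A'_def before_def by blast
      have Asub: "A \<subseteq> items n M" "A \<inter> M k = {}" using run_A[OF r k] A_def by auto
      have X: "X \<subseteq> M k" using runP(1)[OF r' k] X_def by simp
      have Y: "Y \<subseteq> M k" using runP(1)[OF r k] Y_def by simp
      have sm: "supermodular_on (M k) (v k)" using supv k by auto
      have "ut C (v k) A Y \<le> ut C (v k) A (X \<union> Y)"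
      proof (cases "k \<in> K")
        case True
        have h: "v k Y - payment C ALG k \<le> v k X - payment C ALG' k" using hyp True unfolding X_def Y_def by blast
        have uY: "v k Y - payment C ALG k = ut C (v k) A Y" unfolding Y_def A_def by (rule util_eq[OF k])
        have uX: "v k X - payment C ALG' k = ut C (v k) A' X" unfolding X_def A'_def by (rule util_eq[OF k])
        have "ut C (v k) A Y \<le> ut C (v k) A' X" using h uX uY by linarith
        also have "\<dots> \<le> ut C (v k) A X" using ut_mono_A[OF AA Asub k X] .
        finally have "ut C (v k) A Y \<le> ut C (v k) A X" .
        moreover have "ut C (v k) A (X \<inter> Y) \<le> ut C (v k) A Y"
          using runP(2)[OF r k, of "X \<inter> Y"] X unfolding A_def Y_def by auto
        ultimately show ?thesis using sup_ut[OF k Asub(1) sm X Y] by linarith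
      next
        case False
        then have eqw: "\<And>S. S \<subseteq> M k \<Longrightarrow> w k S = v k S" using wv k by auto
        have "\<forall>S. S \<subseteq> M k \<longrightarrow> ut C (v k) A' S \<le> ut C (v k) A' X"
        proof (intro allI impI)
          fix S assume S: "S \<subseteq> M k"
          have "ut C (w k) A' S \<le> ut C (w k) A' X" using runP(2)[OF r' k S] unfolding A'_def X_def .
          then show "ut C (v k) A' S \<le> ut C (v k) A' X" using eqw[OF S] eqw[OF X] by (simp add: ut_def)
        qed
        then show ?thesis using nonK1[OF k AA Asub sm X Y] by simp
      qed
      then have "ut C (v k) A (ALG k) \<le> ut C (v k) A (X \<union> ALG k)" using Y_def by simp
      then show "ALG' k \<subseteq> ALG k" using conclude_sub[OF r k X] unfolding A_def X_def by simp
    qed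
  qed
  show ?thesis
  proof
    fix i assume i: "i \<in> K"
    then have ik: "i \<in> {1..n}" using K by auto
    have AA: "before ALG' i \<subseteq> before ALG i" using inv ik unfolding before_def by force
    have X: "ALG' i \<subseteq> M i" using runP(1)[OF r' ik] .
    have "ut C (v i) (before ALG' i) (ALG' i) \<le> ut C (v i) (before ALG i) (ALG i)"
      using weak_loss[OF r ik AA X] .
    then have lo: "ut C (v i) (before ALG' i) (ALG' i) \<le> ut C (v i) (before ALG i) (ALG i)" .
    show "v i (ALG i) - payment C ALG i = v i (ALG' i) - payment C ALG' i"
    proof -
      have h: "v i (ALG i) - payment C ALG i \<le> v i (ALG' i) - payment C ALG' i" using hyp i by blast
      show ?thesis using h lo util_eq[OF ik, of "v i" ALG] util_eq[OF ik, of "v i" ALG'] by linarith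
    qed
  qed
qed

end



context mech
begin

lemma replace:
  assumes ps: "playerwise_symmetric n M C" and k: "k \<in> {1..n}"
    and FG: "\<forall>j\<in>{1..<k}. F j \<subseteq> M j \<and> G j \<subseteq> M j \<and> card (F j) = card (G j)"
    and Z: "Z \<subseteq> M k" and Z': "Z' \<subseteq> M k" and cZ: "card Z = card Z'"
  shows "C (before F k \<union> Z) = C (before G k \<union> Z')"
proof -
  have F: "\<forall>j\<in>{1..<k}. F j \<subseteq> M j" and G: "\<forall>j\<in>{1..<k}. G j \<subseteq> M j" using FG by auto
  have s1: "before F k \<union> Z \<subseteq> items n M" using before_sub[OF F] k Z M_items[OF k] by auto
  have s2: "before G k \<union> Z' \<subseteq> items n M" using before_sub[OF G] k Z' M_items[OF k] by auto
  have "card ((before F k \<union> Z) \<inter> M m) = card ((before G k \<union> Z') \<inter> M m)" if m: "m \<in> {1..n}" for m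
    using before_comp[OF F k Z m] before_comp[OF G k Z' m] FG cZ m by auto
  then show ?thesis using pw_apply[OF ps s1 s2] by blast
qed

lemma nonK2:
  assumes k: "k \<in> {1..n}" and AA: "A'' \<subseteq> A" and A: "A \<subseteq> items n M" "A \<inter> M k = {}"
    and X: "X \<subseteq> M k" and Y0: "Y0 \<subseteq> X"
    and le: "ut C f A'' Y0 \<le> ut C f A'' X"
  shows "ut C f A Y0 \<le> ut C f A X"
proof -
  have "C ((A'' \<union> X) \<union> (A \<union> Y0)) + C ((A'' \<union> X) \<inter> (A \<union> Y0)) \<le> C (A'' \<union> X) + C (A \<union> Y0)"
    by (rule submod) (use A AA X Y0 M_items[OF k] in auto)+
  moreover have "(A'' \<union> X) \<union> (A \<union> Y0) = A \<union> X" using AA Y0 by auto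
  moreover have "(A'' \<union> X) \<inter> (A \<union> Y0) = A'' \<union> Y0" using AA A X Y0 by auto
  ultimately show ?thesis using le unfolding ut_def by simp
qed

lemma gsp2:
  assumes ps: "playerwise_symmetric n M C" and symv: "\<forall>i\<in>{1..n}. symmetric_on (M i) (v i)"
    and K: "K \<subseteq> {1..n}" and wv: "\<forall>i\<in>{1..n} - K. \<forall>S\<subseteq>M i. w i S = v i S"
    and r: "seq_run n M C v ALG" and r': "seq_run n M C w ALG'"
    and hyp: "\<forall>i\<in>K. v i (ALG i) - payment C ALG i \<le> v i (ALG' i) - payment C ALG' i"
  shows "\<forall>i\<in>K. v i (ALG i) - payment C ALG i = v i (ALG' i) - payment C ALG' i"
proof -
  define B where "B j = (SOME T. T \<subseteq> ALG j \<and> card T = card (ALG' j))" for j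
  have Bp: "B j \<subseteq> ALG j \<and> card (B j) = card (ALG' j)" if cj: "card (ALG' j) \<le> card (ALG j)" for j
  proof -
    obtain T where "T \<subseteq> ALG j" "card T = card (ALG' j)" using obtain_subset_with_card_n[OF cj] by metis
    then show ?thesis unfolding B_def by (metis (mono_tags, lifting) someI)
  qed
  have key: "before B k \<subseteq> before ALG k \<and>
      (\<forall>Z. Z \<subseteq> M k \<longrightarrow> ut C f (before B k) Z = ut C f (before ALG' k) Z)"
    if k: "k \<in> {1..n}" and IH: "\<forall>j\<in>{1..<k}. card (ALG' j) \<le> card (ALG j)" for k f
  proof -
    have Bj: "\<forall>j\<in>{1..<k}. B j \<subseteq> ALG j \<and> card (B j) = card (ALG' j)" using Bp IH by auto
    have pre: "\<forall>j\<in>{1..<k}. ALG j \<subseteq> M j" "\<forall>j\<in>{1..<k}. ALG' j \<subseteq> M j"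
      using run_pre[OF r, of k] run_pre[OF r', of k] k by auto
    have FG: "\<forall>j\<in>{1..<k}. B j \<subseteq> M j \<and> ALG' j \<subseteq> M j \<and> card (B j) = card (ALG' j)"
      using Bj pre by blast
    have "before B k \<subseteq> before ALG k" using Bj unfolding before_def by blast
    moreover have "ut C f (before B k) Z = ut C f (before ALG' k) Z" if Z: "Z \<subseteq> M k" for Z
    proof -
      have "C (before B k \<union> Z) = C (before ALG' k \<union> Z)" using replace[OF ps k FG Z Z] by simp
      moreover have "C (before B k \<union> {}) = C (before ALG' k \<union> {})" using replace[OF ps k FG, of "{}" "{}"] by simp
      ultimately show ?thesis unfolding ut_def by simp
    qed
    ultimately show ?thesis by blast
  qed
  have inv: "k \<in> {1..n} \<longrightarrow> card (ALG' k) \<le> card (ALG k)" for k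
  proof (induction k rule: less_induct)
    case (less k)
    show ?case
    proof
      assume k: "k \<in> {1..n}"
      define A where "A = before ALG k"
      define A' where "A' = before ALG' k"
      define A'' where "A'' = before B k"
      define X where "X = ALG' k"
      define Y where "Y = ALG k"
      have IH: "\<forall>j\<in>{1..<k}. card (ALG' j) \<le> card (ALG j)" using less k by auto
      have AA: "A'' \<subseteq> A" using key[OF k IH] A''_def A_def by auto
      have eqA: "\<And>Z f. Z \<subseteq> M k \<Longrightarrow> ut C f A'' Z = ut C f A' Z" using key[OF k IH] A''_def A'_def by auto
      have Asub: "A \<subseteq> items n M" "A \<inter> M k = {}" using run_A[OF r k] A_def by auto
      have X: "X \<subseteq> M k" using runP(1)[OF r' k] X_def by simp
      have Y: "Y \<subseteq> M k" using runP(1)[OF r k] Y_def by simp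
      show "card (ALG' k) \<le> card (ALG k)"
      proof (cases "k \<in> K")
        case True
        have h: "v k Y - payment C ALG k \<le> v k X - payment C ALG' k" using hyp True unfolding X_def Y_def by blast
        have uY: "v k Y - payment C ALG k = ut C (v k) A Y" unfolding Y_def A_def by (rule util_eq[OF k])
        have uX: "v k X - payment C ALG' k = ut C (v k) A' X" unfolding X_def A'_def by (rule util_eq[OF k])
        have "ut C (v k) A Y \<le> ut C (v k) A' X" using h uX uY by linarith
        also have "\<dots> = ut C (v k) A'' X" using eqA[OF X] by simp
        also have "\<dots> \<le> ut C (v k) A X" using ut_mono_A[OF AA Asub k X] .
        finally have "ut C (v k) A Y \<le> ut C (v k) A X" .
        then have "ut C (v k) A X = ut C (v k) A Y"
          using runP(2)[OF r k X] unfolding A_def Y_def by linarith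
        then show ?thesis using runP(3)[OF r k X] unfolding A_def X_def Y_def by simp
      next
        case False
        then have eqw: "\<And>S. S \<subseteq> M k \<Longrightarrow> w k S = v k S" using wv k by auto
        show ?thesis
        proof (rule ccontr)
          assume "\<not> card (ALG' k) \<le> card (ALG k)"
          then have cXY: "card Y \<le> card X" unfolding X_def Y_def by simp
          obtain Y0 where Y0: "Y0 \<subseteq> X" "card Y0 = card Y" using obtain_subset_with_card_n[OF cXY] by metis
          have Y0M: "Y0 \<subseteq> M k" using Y0 X by auto
          have "ut C (w k) A' Y0 \<le> ut C (w k) A' X" using runP(2)[OF r' k Y0M] unfolding A'_def X_def .
          then have "ut C (v k) A' Y0 \<le> ut C (v k) A' X" using eqw[OF Y0M] eqw[OF X] by (simp add: ut_def)
          then have "ut C (v k) A'' Y0 \<le> ut C (v k) A'' X" using eqA[OF Y0M] eqA[OF X] by simp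
          then have l1: "ut C (v k) A Y0 \<le> ut C (v k) A X" using nonK2[OF k AA Asub X Y0(1)] by simp
          have pre: "\<forall>j\<in>{1..<k}. ALG j \<subseteq> M j \<and> ALG j \<subseteq> M j \<and> card (ALG j) = card (ALG j)"
            using run_pre[OF r, of k] k by simp
          have "C (A \<union> Y0) = C (A \<union> Y)" using replace[OF ps k pre Y0M Y Y0(2)] unfolding A_def .
          moreover have "v k Y0 = v k Y"
          proof -
            have "symmetric_on (M k) (v k)" using symv k by blast
            then show ?thesis using Y0M Y Y0(2) unfolding symmetric_on_def by blast
          qed
          ultimately have "ut C (v k) A Y0 = ut C (v k) A Y" by (simp add: ut_def)
          then have "ut C (v k) A X = ut C (v k) A Y"
            using l1 runP(2)[OF r k X] unfolding A_def Y_def by linarith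
          then have "card X \<le> card Y" using runP(3)[OF r k X] unfolding A_def X_def Y_def by simp
          then show False using \<open>\<not> card (ALG' k) \<le> card (ALG k)\<close> X_def Y_def by simp
        qed
      qed
    qed
  qed
  show ?thesis
  proof
    fix i assume i: "i \<in> K"
    then have ik: "i \<in> {1..n}" using K by auto
    have IH: "\<forall>j\<in>{1..<i}. card (ALG' j) \<le> card (ALG j)" using inv ik by auto
    have X: "ALG' i \<subseteq> M i" using runP(1)[OF r' ik] .
    have "ut C (v i) (before ALG' i) (ALG' i) = ut C (v i) (before B i) (ALG' i)"
      using key[OF ik IH] X by simp
    also have "\<dots> \<le> ut C (v i) (before ALG i) (ALG i)"
      using weak_loss[OF r ik _ X] key[OF ik IH] by blast
    finally have lo: "ut C (v i) (before ALG' i) (ALG' i) \<le> ut C (v i) (before ALG i) (ALG i)" .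
    show "v i (ALG i) - payment C ALG i = v i (ALG' i) - payment C ALG' i"
    proof -
      have h: "v i (ALG i) - payment C ALG i \<le> v i (ALG' i) - payment C ALG' i" using hyp i by blast
      show ?thesis using h lo util_eq[OF ik, of "v i" ALG] util_eq[OF ik, of "v i" ALG'] by linarith
    qed
  qed
qed

end


theorem theorem7p1:
  fixes n :: nat and M :: "nat \<Rightarrow> 'a set" and C :: "'a set \<Rightarrow> real"
    and v :: "nat \<Rightarrow> 'a set \<Rightarrow> real"
  assumes "valid_items n M"
    and "cost_function (items n M) C"
    and "\<forall>i\<in>{1..n}. valuation (M i) (v i)"
  shows "(submodular_on (items n M) C \<and> (\<forall>i\<in>{1..n}. supermodular_on (M i) (v i)) \<longrightarrow>
           seq_mech_properties n M C (\<lambda>i f. valuation (M i) f \<and> supermodular_on (M i) f) v)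
       \<and> (submodular_on (items n M) C \<and> playerwise_symmetric n M C \<and>
           (\<forall>i\<in>{1..n}. symmetric_on (M i) (v i)) \<longrightarrow>
           seq_mech_properties n M C (\<lambda>i f. valuation (M i) f \<and> symmetric_on (M i) f) v)"
proof -
  have common: "\<forall>ALG. seq_run n M C v ALG \<longrightarrow>
        (\<Sum>i\<in>{1..n}. payment C ALG i) = C (\<Union>i\<in>{1..n}. ALG i) \<and>
        (\<forall>S. allocation n M S \<longrightarrow>
             social_cost n M C v ALG \<le> real n * social_cost n M C v S) \<and>
        (\<forall>i\<in>{1..n}. payment C ALG i \<le> v i (ALG i)) \<and>
        (\<forall>i\<in>{1..n}. 0 \<le> payment C ALG i)" if sm: "submodular_on (items n M) C"
  proof -
    interpret mech n M C using assms(1,2) sm by unfold_locales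
    show ?thesis using budget approx[OF _ assms(3)] ir npt assms(3) by blast
  qed
  show ?thesis
  proof (intro conjI impI)
    assume h: "submodular_on (items n M) C \<and> (\<forall>i\<in>{1..n}. supermodular_on (M i) (v i))"
    interpret mech n M C using assms(1,2) h by unfold_locales auto
    show "seq_mech_properties n M C (\<lambda>i f. valuation (M i) f \<and> supermodular_on (M i) f) v"
      unfolding seq_mech_properties_def groupstrategyproof_def
    proof (intro conjI allI impI)
      fix K w ALG ALG'
      assume "K \<subseteq> {1..n}" "\<forall>i\<in>{1..n} - K. \<forall>S\<subseteq>M i. w i S = v i S"
        "seq_run n M C v ALG" "seq_run n M C w ALG'"
        "\<forall>i\<in>K. v i (ALG i) - payment C ALG i \<le> v i (ALG' i) - payment C ALG' i"
      then show "\<forall>i\<in>K. v i (ALG i) - payment C ALG i = v i (ALG' i) - payment C ALG' i"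
        using gsp1[of v K w ALG ALG'] h by blast
    qed (use common h in blast)+
  next
    assume h: "submodular_on (items n M) C \<and> playerwise_symmetric n M C \<and>
           (\<forall>i\<in>{1..n}. symmetric_on (M i) (v i))"
    interpret mech n M C using assms(1,2) h by unfold_locales auto
    show "seq_mech_properties n M C (\<lambda>i f. valuation (M i) f \<and> symmetric_on (M i) f) v"
      unfolding seq_mech_properties_def groupstrategyproof_def
    proof (intro conjI allI impI)
      fix K w ALG ALG'
      assume "K \<subseteq> {1..n}" "\<forall>i\<in>{1..n} - K. \<forall>S\<subseteq>M i. w i S = v i S"
        "seq_run n M C v ALG" "seq_run n M C w ALG'"
        "\<forall>i\<in>K. v i (ALG i) - payment C ALG i \<le> v i (ALG' i) - payment C ALG' i"
      then show "\<forall>i\<in>K. v i (ALG i) - payment C ALG i = v i (ALG' i) - payment C ALG' i"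
        using gsp2[of v K w ALG ALG'] h by blast
    qed (use common h in blast)+
  qed
qed

end
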